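(* Let $\mathcal{C}$ be a flag code of type $(t_1,\ldots,t_r)$ on $\mathbb{F}_q^n$. Then $\mathcal{C}$ is an optimum distance flag code if and only if $\mathcal{C}$ is disjoint and, for every $i\in\{1,\ldots,r\}$, the projected code $\mathcal{C}_i$ satisfies $d_S(\mathcal{C}_i)=\min\{2t_i,2(n-t_i)\}$.
   Context: $q$ is a prime power, $n>1$. For subspaces $\mathcal{U},\mathcal{V}$ of $\mathbb{F}_q^n$, $d_S(\mathcal{U},\mathcal{V})=\dim(\mathcal{U}+\mathcal{V})-\dim(\mathcal{U}\cap\mathcal{V})$; for a set $\mathcal{D}$ of subspaces, $d_S(\mathcal{D})$ is the minimum of $d_S$ over pairs of distinct elements (and $0$ if $|\mathcal{D}|=1$). A flag of type $(t_1,\ldots,t_r)$, $0<t_1<\cdots<t_r<n$, is a tuple $(\mathcal{F}_1,\ldots,\mathcal{F}_r)$ of nested subspaces $\mathcal{F}_1\subsetneq\cdots\subsetneq\mathcal{F}_r$ of $\mathbb{F}_q^n$ with $\dim\mathcal{F}_i=t_i$. A flag code of that type is a set of at least two such flags; its distance $d_f(\mathcal{C})$ is the minimum over distinct $\mathcal{F},\mathcal{F}'\in\mathcal{C}$ of $\sum_{i=1}^r d_S(\mathcal{F}_i,\mathcal{F}'_i)$. It is an optimum distance flag code if $d_f(\mathcal{C})= 2\left(\sum_{t_i \leq \lfloor n/2\rfloor} t_i + \sum_{t_i > \lfloor n/2\rfloor} (n-t_i)\right)$. The $i$-projected code is $\mathcal{C}_i=\{\mathcal{F}_i : (\mathcal{F}_1,\ldots,\mathcal{F}_r)\in\mathcal{C}\}$.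 The code $\mathcal{C}$ is disjoint if $|\mathcal{C}_1|=\cdots=|\mathcal{C}_r|=|\mathcal{C}|$. *)

theory Defs
  imports "HOL-Analysis.Analysis"
begin

text \<open>Ambient space F_q^n is modelled as the type 'a^'n with 'a a finite field
  (so q = CARD('a) is a prime power) and n = CARD('n).\<close>

definition is_subspace :: "('a::field ^ 'n) set \<Rightarrow> bool" where
  "is_subspace U \<longleftrightarrow> vec.subspace U"

definition sdim :: "('a::field ^ 'n) set \<Rightarrow> nat" where
  "sdim U = vec.dim U"

definition subspace_sum :: "('a::field ^ 'n) set \<Rightarrow> ('a ^ 'n) set \<Rightarrow> ('a ^ 'n) set" where
  "subspace_sum U V = {u + v | u v. u \<in> U \<and> v \<in> V}"

definition dS :: "('a::field ^ 'n) set \<Rightarrow> ('a ^ 'n) set \<Rightarrow> nat" where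
  "dS U V = sdim (subspace_sum U V) - sdim (U \<inter> V)"

definition dS_code :: "('a::field ^ 'n) set set \<Rightarrow> nat" where
  "dS_code D = (if card D \<le> 1 then 0
     else Min {dS U V | U V. U \<in> D \<and> V \<in> D \<and> U \<noteq> V})"

definition flag_type :: "nat \<Rightarrow> nat list \<Rightarrow> bool" where
  "flag_type n ts \<longleftrightarrow> ts \<noteq> [] \<and> sorted_wrt (<) ts \<and> (\<forall>t\<in>set ts. 0 < t \<and> t < n)"

definition is_flag :: "nat list \<Rightarrow> ('a::field ^ 'n) set list \<Rightarrow> bool" where
  "is_flag ts F \<longleftrightarrow> length F = length ts
     \<and> (\<forall>i < length ts. is_subspace (F ! i) \<and> sdim (F ! i) = ts ! i)
     \<and> (\<forall>i. Suc i < length F \<longrightarrow> F ! i \<subset> F ! Suc i)"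

definition flag_code :: "nat list \<Rightarrow> ('a::field ^ 'n) set list set \<Rightarrow> bool" where
  "flag_code ts C \<longleftrightarrow> finite C \<and> card C \<ge> 2 \<and> (\<forall>F\<in>C. is_flag ts F)"

definition flag_dist :: "('a::field ^ 'n) set list \<Rightarrow> ('a ^ 'n) set list \<Rightarrow> nat" where
  "flag_dist F F' = (\<Sum>i < length F. dS (F ! i) (F' ! i))"

definition flag_code_dist :: "('a::field ^ 'n) set list set \<Rightarrow> nat" where
  "flag_code_dist C = Min {flag_dist F F' | F F'. F \<in> C \<and> F' \<in> C \<and> F \<noteq> F'}"

definition optimum_distance :: "nat \<Rightarrow> nat list \<Rightarrow> ('a::field ^ 'n) set list set \<Rightarrow> bool" where
  "optimum_distance n ts C \<longleftrightarrow>
     flag_code_dist C = 2 * (\<Sum>i < length ts. if ts ! i \<le> n div 2 then ts ! i else n - ts ! i)"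

text \<open>i-projected code (0-based index).\<close>
definition projected :: "('a::field ^ 'n) set list set \<Rightarrow> nat \<Rightarrow> ('a ^ 'n) set set" where
  "projected C i = (\<lambda>F. F ! i) ` C"

definition disjoint_flag_code :: "nat list \<Rightarrow> ('a::field ^ 'n) set list set \<Rightarrow> bool" where
  "disjoint_flag_code ts C \<longleftrightarrow> (\<forall>i < length ts. card (projected C i) = card C)"

end

theory Submission
  imports Defs
begin

lemma dS_bound:
  fixes U V :: "('a::field ^ 'n) set"
  assumes "is_subspace U" "is_subspace V" "sdim U = t" "sdim V = t"
  shows "dS U V \<le> 2 * min t (CARD('n) - t)"
proof -
  have g: "sdim (subspace_sum U V) + sdim (U \<inter> V) = t + t"
    using vec.dim_sums_Int[of U V] assms
    unfolding is_subspace_def sdim_def subspace_sum_def by simp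
  have n: "sdim (subspace_sum U V) \<le> CARD('n)"
    unfolding sdim_def by (rule dim_subset_UNIV_cart_gen)
  show ?thesis unfolding dS_def using g n by linarith
qed

lemma dS_self:
  fixes U :: "('a::field ^ 'n) set"
  assumes "is_subspace U"
  shows "dS U U = 0"
proof -
  have "subspace_sum U U = U"
  proof
    show "subspace_sum U U \<subseteq> U" using assms
      unfolding subspace_sum_def is_subspace_def by (auto intro: vec.subspace_add)
    show "U \<subseteq> subspace_sum U U" using assms
      unfolding subspace_sum_def is_subspace_def
      by (auto intro!: vec.subspace_0) (metis add.right_neutral vec.subspace_0)
  qed
  then show ?thesis unfolding dS_def by simp
qed

theorem theorem3p11:
  fixes C :: "('a::{field,finite} ^ 'n) set list set" and ts :: "nat list"
  assumes "CARD('n) > 1"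
    and "flag_type CARD('n) ts"
    and "flag_code ts C"
  shows "optimum_distance CARD('n) ts C \<longleftrightarrow>
           disjoint_flag_code ts C \<and>
           (\<forall>i < length ts. dS_code (projected C i) = min (2 * ts ! i) (2 * (CARD('n) - ts ! i)))"
proof -
  define n where "n = CARD('n)"
  define m where "m i = (if ts ! i \<le> n div 2 then ts ! i else n - ts ! i)" for i
  define D where "D = 2 * (\<Sum>i < length ts. m i)"
  have finC: "finite C" and cardC: "card C \<ge> 2" and flags: "\<And>F. F \<in> C \<Longrightarrow> is_flag ts F"
    using assms(3) unfolding flag_code_def by auto
  have tsr: "\<And>i. i < length ts \<Longrightarrow> 0 < ts ! i \<and> ts ! i < n"
    using assms(2) unfolding flag_type_def n_def by auto
  have mmin: "\<And>i. i < length ts \<Longrightarrow> min (2 * ts ! i) (2 * (n - ts ! i)) = 2 * m i"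
    unfolding m_def by auto
  have mpos: "\<And>i. i < length ts \<Longrightarrow> m i > 0"
    using tsr unfolding m_def by auto
  have bound: "\<And>F F' i. F \<in> C \<Longrightarrow> F' \<in> C \<Longrightarrow> i < length ts \<Longrightarrow> dS (F ! i) (F' ! i) \<le> 2 * m i"
  proof -
    fix F F' i assume h: "F \<in> C" "F' \<in> C" "i < length ts"
    have "dS (F ! i) (F' ! i) \<le> 2 * min (ts ! i) (CARD('n) - ts ! i)"
      using flags[OF h(1)] flags[OF h(2)] h(3) unfolding is_flag_def
      by (intro dS_bound) auto
    then show "dS (F ! i) (F' ! i) \<le> 2 * m i" using mmin[OF h(3)] unfolding n_def by simp
  qed
  have len: "\<And>F. F \<in> C \<Longrightarrow> length F = length ts" using flags unfolding is_flag_def by auto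
  have sub: "\<And>F i. F \<in> C \<Longrightarrow> i < length ts \<Longrightarrow> is_subspace (F ! i)"
    using flags unfolding is_flag_def by auto
  define P where "P = (\<forall>F\<in>C. \<forall>F'\<in>C. F \<noteq> F' \<longrightarrow> (\<forall>i<length ts. dS (F!i) (F'!i) = 2 * m i))"
  have fdle: "\<And>F F'. F \<in> C \<Longrightarrow> F' \<in> C \<Longrightarrow> flag_dist F F' \<le> D"
  proof -
    fix F F' assume h: "F \<in> C" "F' \<in> C"
    have "(\<Sum>i<length ts. dS (F ! i) (F' ! i)) \<le> (\<Sum>i<length ts. 2 * m i)"
      by (rule sum_mono) (use bound h in auto)
    then show "flag_dist F F' \<le> D"
      unfolding flag_dist_def D_def sum_distrib_left using len[OF h(1)] by simp
  qed
  have ne: "\<exists>F\<in>C. \<exists>F'\<in>C. F \<noteq> F'"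
  proof -
    have "C \<noteq> {}" using cardC by auto
    then obtain x where x: "x \<in> C" by blast
    have "card (C - {x}) \<ge> 1" using cardC x finC by simp
    then obtain y where "y \<in> C - {x}"
      by (metis One_nat_def card.empty ex_in_conv not_less_eq_eq zero_le)
    then show ?thesis using x by blast
  qed
  have finS: "finite {flag_dist F F' | F F'. F \<in> C \<and> F' \<in> C \<and> F \<noteq> F'}"
  proof -
    have "{flag_dist F F' | F F'. F \<in> C \<and> F' \<in> C \<and> F \<noteq> F'} \<subseteq> (\<lambda>(F,F'). flag_dist F F') ` (C \<times> C)"
      by auto
    then show ?thesis by (rule finite_subset) (use finC in auto)
  qed
  have L: "optimum_distance CARD('n) ts C \<longleftrightarrow> P"
  proof
    assume opt: "optimum_distance CARD('n) ts C"
    then have md: "flag_code_dist C = D"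
      unfolding optimum_distance_def D_def m_def n_def by simp
    show P unfolding P_def
    proof (intro ballI impI allI)
      fix F F' i assume h: "F \<in> C" "F' \<in> C" "F \<noteq> F'" "i < length ts"
      have "D \<le> flag_dist F F'"
        using md finS h unfolding flag_code_dist_def by (metis (mono_tags, lifting) Min_le mem_Collect_eq)
      show "dS (F!i) (F'!i) = 2 * m i"
      proof (rule ccontr)
        assume "dS (F!i) (F'!i) \<noteq> 2 * m i"
        then have "dS (F!i) (F'!i) < 2 * m i" using bound h by (meson le_neq_implies_less)
        then have "(\<Sum>j<length ts. dS (F!j) (F'!j)) < (\<Sum>j<length ts. 2 * m j)"
          using h bound by (intro sum_strict_mono_ex1) auto
        then show False using \<open>D \<le> flag_dist F F'\<close> len[OF h(1)]
          unfolding flag_dist_def D_def by (simp add: sum_distrib_left)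
      qed
    qed
  next
    assume p: P
    have "{flag_dist F F' | F F'. F \<in> C \<and> F' \<in> C \<and> F \<noteq> F'} = {D}"
    proof -
      have "flag_dist F F' = D" if "F \<in> C" "F' \<in> C" "F \<noteq> F'" for F F'
        using p that len unfolding P_def flag_dist_def D_def by (simp add: sum_distrib_left)
      then show ?thesis using ne by blast
    qed
    then show "optimum_distance CARD('n) ts C"
      unfolding optimum_distance_def flag_code_dist_def D_def m_def n_def by simp
  qed
  have finP: "\<And>i. finite (projected C i)" unfolding projected_def using finC by simp
  have finT: "\<And>i. finite {dS U V | U V. U \<in> projected C i \<and> V \<in> projected C i \<and> U \<noteq> V}"
  proof -
    fix i
    have "{dS U V | U V. U \<in> projected C i \<and> V \<in> projected C i \<and> U \<noteq> V}
        \<subseteq> (\<lambda>(U,V). dS U V) ` (projected C i \<times> projected C i)" by auto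
    then show "finite {dS U V | U V. U \<in> projected C i \<and> V \<in> projected C i \<and> U \<noteq> V}"
      by (rule finite_subset) (use finP in auto)
  qed
  have R: "(disjoint_flag_code ts C \<and>
           (\<forall>i < length ts. dS_code (projected C i) = min (2 * ts ! i) (2 * (CARD('n) - ts ! i)))) \<longleftrightarrow> P"
  proof
    assume r: "disjoint_flag_code ts C \<and>
           (\<forall>i < length ts. dS_code (projected C i) = min (2 * ts ! i) (2 * (CARD('n) - ts ! i)))"
    show P unfolding P_def
    proof (intro ballI impI allI)
      fix F F' i assume h: "F \<in> C" "F' \<in> C" "F \<noteq> F'" "i < length ts"
      have cp: "card (projected C i) = card C" using r h(4) unfolding disjoint_flag_code_def by simp
      then have inj: "inj_on (\<lambda>F. F ! i) C"
        using finC eq_card_imp_inj_on unfolding projected_def by blast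
      then have neq: "F ! i \<noteq> F' ! i" using h by (meson inj_onD)
      have dc: "dS_code (projected C i) = 2 * m i" using r h(4) mmin n_def by simp
      have "dS_code (projected C i) = Min {dS U V | U V. U \<in> projected C i \<and> V \<in> projected C i \<and> U \<noteq> V}"
        using cp cardC unfolding dS_code_def by simp
      moreover have "Min {dS U V | U V. U \<in> projected C i \<and> V \<in> projected C i \<and> U \<noteq> V} \<le> dS (F!i) (F'!i)"
        using finT neq h unfolding projected_def by (intro Min_le) auto
      ultimately show "dS (F!i) (F'!i) = 2 * m i" using dc bound h by (metis le_antisym)
    qed
  next
    assume p: P
    have inj: "inj_on (\<lambda>F. F ! i) C" if "i < length ts" for i
    proof (rule inj_onI, rule ccontr)
      fix F F' assume h: "F \<in> C" "F' \<in> C" "F ! i = F' ! i" "F \<noteq> F'"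
      then have "dS (F!i) (F'!i) = 2 * m i" using p that unfolding P_def by blast
      moreover have "dS (F!i) (F'!i) = 0" using h sub that by (simp add: dS_self)
      ultimately show False using mpos[OF that] by simp
    qed
    have cp: "card (projected C i) = card C" if "i < length ts" for i
      unfolding projected_def using card_image[OF inj[OF that]] .
    show "disjoint_flag_code ts C \<and>
           (\<forall>i < length ts. dS_code (projected C i) = min (2 * ts ! i) (2 * (CARD('n) - ts ! i)))"
    proof (intro conjI allI impI)
      show "disjoint_flag_code ts C" unfolding disjoint_flag_code_def using cp by simp
      fix i assume i: "i < length ts"
      have T: "{dS U V | U V. U \<in> projected C i \<and> V \<in> projected C i \<and> U \<noteq> V} = {2 * m i}"
      proof -
        have "dS U V = 2 * m i" if uv: "U \<in> projected C i" "V \<in> projected C i" "U \<noteq> V" for U V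
        proof -
          obtain F where F: "F \<in> C" "U = F ! i" using uv(1) unfolding projected_def by blast
          obtain F' where F': "F' \<in> C" "V = F' ! i" using uv(2) unfolding projected_def by blast
          have "F \<noteq> F'" using F F' uv(3) by blast
          then show ?thesis using p i F F' unfolding P_def by blast
        qed
        note all = this
        obtain F F' where FF: "F \<in> C" "F' \<in> C" "F \<noteq> F'" using ne by blast
        have neq: "F ! i \<noteq> F' ! i" using inj[OF i] FF by (meson inj_onD)
        have in1: "F ! i \<in> projected C i" "F' ! i \<in> projected C i"
          using FF unfolding projected_def by auto
        have "2 * m i \<in> {dS U V | U V. U \<in> projected C i \<and> V \<in> projected C i \<and> U \<noteq> V}"
          using all[OF in1 neq] in1 neq by force
        then show ?thesis using all by auto
      qed
      show "dS_code (projected C i) = min (2 * ts ! i) (2 * (CARD('n) - ts ! i))"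
        unfolding dS_code_def using T cp[OF i] cardC mmin[OF i] n_def by simp
    qed
  qed
  show ?thesis using L R by simp
qed

end
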